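(* Let $\Lambda=\mathbb{Z}\oplus\mathbb{Z}\tau\subset\mathbb{C}$ with $\mathrm{Im}\,\tau>0$, $|\Lambda|$ its covolume, and $\psi$ a character of $\Lambda$. For $x>0$ let $Z(x,\Lambda,\psi)=\sum_{0\ne\mu\in\Lambda,\ |\mu|^2\le x}\psi(\mu)/|\mu|^2$. (1) If $\psi$ is trivial, there is a constant $\eta_\Lambda$ depending only on $\Lambda$ such that $Z(x,\Lambda,\psi)=\frac{\pi}{|\Lambda|}(\ln x+\eta_\Lambda)+O(x^{-1/2})$ as $x\to\infty$. (2) If $\psi$ is nontrivial, the limit $L(\Lambda,\psi)=\lim_{x\to\infty}Z(x,\Lambda,\psi)$ exists and $Z(x,\Lambda,\psi)=L(\Lambda,\psi)+O(x^{-1/2})$ as $x\to\infty$.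
   Context: A character of the lattice $\Lambda$ is a homomorphism $\psi:\Lambda\to\{w\in\mathbb{C}:|w|=1\}$ (a one-dimensional unitary representation). *)

theory Defs
  imports "HOL-Analysis.Analysis" "HOL-Library.Landau_Symbols"
begin

definition lattice :: "complex \<Rightarrow> complex set" where
  "lattice \<tau> = {of_int m + of_int n * \<tau> | m n. True}"

definition covolume :: "complex \<Rightarrow> real" where
  "covolume \<tau> = \<bar>Im \<tau>\<bar>"

definition is_character :: "complex \<Rightarrow> (complex \<Rightarrow> complex) \<Rightarrow> bool" where
  "is_character \<tau> \<psi> \<longleftrightarrow>
     (\<forall>\<mu>\<in>lattice \<tau>. norm (\<psi> \<mu>) = 1) \<and>
     (\<forall>\<mu>\<in>lattice \<tau>. \<forall>\<nu>\<in>lattice \<tau>. \<psi> (\<mu> + \<nu>) = \<psi> \<mu> * \<psi> \<nu>)"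

definition Zsum :: "real \<Rightarrow> complex \<Rightarrow> (complex \<Rightarrow> complex) \<Rightarrow> complex" where
  "Zsum x \<tau> \<psi> = (\<Sum>\<mu>\<in>{\<mu>\<in>lattice \<tau>. \<mu> \<noteq> 0 \<and> (cmod \<mu>)\<^sup>2 \<le> x}. \<psi> \<mu> / of_real ((cmod \<mu>)\<^sup>2))"

end

theory Submission
  imports Defs "HOL-Real_Asymp.Real_Asymp"
begin

lemma int_inv_sq:
  fixes r y :: real assumes "0 < r" "r \<le> y"
  shows "((\<lambda>t. 1/t\<^sup>2) has_integral (1/r - 1/y)) {r..y}"
proof -
  have "((\<lambda>t. 1/t\<^sup>2) has_integral ((\<lambda>t. -1/t) y - (\<lambda>t. -1/t) r)) {r..y}"
  proof (rule fundamental_theorem_of_calculus)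
    fix t assume t: "t \<in> {r..y}"
    then have "t > 0" using assms by auto
    then have "((\<lambda>t. -1/t) has_real_derivative 1/t\<^sup>2) (at t)"
      by (auto intro!: derivative_eq_intros simp: power2_eq_square field_simps)
    then show "((\<lambda>t. -1/t) has_vector_derivative 1/t\<^sup>2) (at t within {r..y})"
      using has_real_derivative_iff_has_vector_derivative has_field_derivative_at_within by blast
  qed (use assms in auto)
  then show ?thesis by simp
qed

lemma int_log_part:
  fixes x y :: real assumes "0 < x" "x \<le> y"
  shows "((\<lambda>t. 1/t - x/t\<^sup>2) has_integral (ln y - ln x - (1 - x/y))) {x..y}"
proof -
  have "((\<lambda>t. 1/t - x/t\<^sup>2) has_integral ((\<lambda>t. ln t + x/t) y - (\<lambda>t. ln t + x/t) x)) {x..y}"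
  proof (rule fundamental_theorem_of_calculus)
    fix t assume t: "t \<in> {x..y}"
    then have "t > 0" using assms by auto
    then have "((\<lambda>t. ln t + x/t) has_real_derivative 1/t - x/t\<^sup>2) (at t)"
      by (auto intro!: derivative_eq_intros simp: power2_eq_square field_simps)
    then show "((\<lambda>t. ln t + x/t) has_vector_derivative 1/t - x/t\<^sup>2) (at t within {x..y})"
      using has_real_derivative_iff_has_vector_derivative has_field_derivative_at_within by blast
  qed (use assms in auto)
  moreover have "ln y + x/y - (ln x + 1) = ln y - ln x - (1 - x/y)" by simp
  ultimately show ?thesis using assms by simp
qed

lemma int_three_half:
  fixes x y :: real assumes "0 < x" "x \<le> y"
  shows "((\<lambda>t. 1/(t * sqrt t)) has_integral (2/sqrt x - 2/sqrt y)) {x..y}"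
proof -
  have "((\<lambda>t. 1/(t * sqrt t)) has_integral ((\<lambda>t. -2/sqrt t) y - (\<lambda>t. -2/sqrt t) x)) {x..y}"
  proof (rule fundamental_theorem_of_calculus)
    fix t assume t: "t \<in> {x..y}"
    then have "t > 0" using assms by auto
    then have "((\<lambda>t. -2/sqrt t) has_real_derivative 1/(t * sqrt t)) (at t)"
      by (auto intro!: derivative_eq_intros simp: power2_eq_square field_simps)
    then show "((\<lambda>t. -2/sqrt t) has_vector_derivative 1/(t * sqrt t)) (at t within {x..y})"
      using has_real_derivative_iff_has_vector_derivative has_field_derivative_at_within by blast
  qed (use assms in auto)
  then show ?thesis using assms by simp
qed

lemma abel_step:
  fixes U :: "'a set" and r :: "'a \<Rightarrow> real" and w :: "'a \<Rightarrow> complex"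
    and S Z :: "real \<Rightarrow> complex" and \<delta> :: complex and C x y :: real
  assumes fin: "\<And>t. finite {\<mu>\<in>U. r \<mu> \<le> t}"
    and S_def: "\<And>t. S t = (\<Sum>\<mu>\<in>{\<mu>\<in>U. r \<mu> \<le> t}. w \<mu>)"
    and Z_def: "\<And>t. Z t = (\<Sum>\<mu>\<in>{\<mu>\<in>U. r \<mu> \<le> t}. w \<mu> / of_real (r \<mu>))"
    and bnd: "\<And>t. t \<ge> 1 \<Longrightarrow> norm (S t - \<delta> * of_real t) \<le> C * sqrt t"
    and xy: "1 \<le> x" "x \<le> y"
  shows "norm ((Z y - \<delta> * of_real (ln y)) - (Z x - \<delta> * of_real (ln x))) \<le> 6 * C / sqrt x"
proof -
  define D where "D = {\<mu>\<in>U. x < r \<mu> \<and> r \<mu> \<le> y}"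
  define A where "A = (\<lambda>t. {\<mu>\<in>U. r \<mu> \<le> t})"
  have finD: "finite D" by (rule finite_subset[OF _ fin[of y]]) (auto simp: D_def)
  have x0: "x > 0" using xy by simp
  have C0: "C \<ge> 0" using bnd[of 1] by (smt (verit) norm_ge_zero real_sqrt_one mult_cancel_left1)
  have Ay: "A y = A x \<union> D" and disj: "A x \<inter> D = {}"
    using xy by (auto simp: A_def D_def)
  have finA: "\<And>t. finite (A t)" using fin by (simp add: A_def)
  have ZA: "\<And>t. Z t = (\<Sum>\<mu>\<in>A t. w \<mu> / of_real (r \<mu>))" by (simp add: Z_def A_def)
  have SA: "\<And>t. S t = (\<Sum>\<mu>\<in>A t. w \<mu>)" by (simp add: S_def A_def)
  have ZD: "Z y - Z x = (\<Sum>\<mu>\<in>D. w \<mu> / of_real (r \<mu>))"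
    unfolding ZA Ay using disj finA finD by (simp add: sum.union_disjoint)
  have SD: "S y - S x = (\<Sum>\<mu>\<in>D. w \<mu>)"
    unfolding SA Ay using disj finA finD by (simp add: sum.union_disjoint)
  have St: "S t - S x = (\<Sum>\<mu>\<in>D. w \<mu> * (if t \<in> {r \<mu>..} then 1 else 0))" if t: "t \<in> {x..y}" for t
  proof -
    have At: "A t = A x \<union> {\<mu>\<in>D. r \<mu> \<le> t}" "A x \<inter> {\<mu>\<in>D. r \<mu> \<le> t} = {}"
      using t by (auto simp: A_def D_def)
    have "S t - S x = (\<Sum>\<mu>\<in>{\<mu>\<in>D. r \<mu> \<le> t}. w \<mu>)"
      unfolding SA At(1) using At(2) finA finD by (simp add: sum.union_disjoint)
    also have "\<dots> = (\<Sum>\<mu>\<in>D. w \<mu> * (if t \<in> {r \<mu>..} then 1 else 0))"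
      using finD by (simp add: sum.inter_filter[symmetric] if_distrib cong: if_cong)
    finally show ?thesis .
  qed
  have each: "((\<lambda>t. w \<mu> * (if t \<in> {r \<mu>..} then of_real (1/t\<^sup>2) else 0)) has_integral
      (w \<mu> * of_real (1 / r \<mu> - 1/y))) {x..y}" if "\<mu> \<in> D" for \<mu>
  proof -
    have r: "0 < r \<mu>" "r \<mu> \<le> y" "x < r \<mu>" using that x0 by (auto simp: D_def)
    have e: "{r \<mu>..} \<inter> {x..y} = {r \<mu>..y}" using r by auto
    have "((\<lambda>t. of_real (1/t\<^sup>2) :: complex) has_integral of_real (1 / r \<mu> - 1/y)) ({r \<mu>..} \<inter> {x..y})"
      unfolding e by (rule has_integral_of_real[OF int_inv_sq[OF r(1,2)]])
    then have "((\<lambda>t. if t \<in> {r \<mu>..} then of_real (1/t\<^sup>2) else 0) has_integral (of_real (1 / r \<mu> - 1/y) :: complex)) {x..y}"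
      by (subst has_integral_restrict_Int) 
    then show ?thesis by (rule has_integral_mult_right)
  qed
  have I1: "((\<lambda>t. (S t - S x) / of_real (t\<^sup>2)) has_integral ((Z y - Z x) - (S y - S x) / of_real y)) {x..y}"
  proof -
    have h1: "((\<lambda>t. \<Sum>\<mu>\<in>D. w \<mu> * (if t \<in> {r \<mu>..} then of_real (1/t\<^sup>2) else 0)) has_integral
      (\<Sum>\<mu>\<in>D. w \<mu> * of_real (1 / r \<mu> - 1/y))) {x..y}"
      by (rule has_integral_sum[OF finD each])
    have h2: "(\<Sum>\<mu>\<in>D. w \<mu> * of_real (1 / r \<mu> - 1/y)) = (Z y - Z x) - (S y - S x) / of_real y"
      unfolding ZD SD by (simp add: sum_subtractf sum_divide_distrib algebra_simps divide_inverse sum_distrib_left sum_distrib_right)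
    have h3: "(\<Sum>\<mu>\<in>D. w \<mu> * (if t \<in> {r \<mu>..} then of_real (1/t\<^sup>2) else 0)) = (S t - S x) / of_real (t\<^sup>2)"
      if "t \<in> {x..y}" for t
      unfolding St[OF that] by (simp add: sum_divide_distrib if_distrib divide_inverse sum_distrib_right cong: if_cong) (rule sum.cong, auto)
    show ?thesis by (rule has_integral_eq[OF h3 h1[unfolded h2]])
  qed
  have I2: "((\<lambda>t. \<delta> * of_real (1/t - x/t\<^sup>2)) has_integral (\<delta> * of_real (ln y - ln x - (1 - x/y)))) {x..y}"
    by (rule has_integral_mult_right[OF has_integral_of_real[OF int_log_part[OF x0 xy(2)]]])
  define G where "G = (\<lambda>t. (S t - S x) / of_real (t\<^sup>2) - \<delta> * of_real (1/t - x/t\<^sup>2))"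
  define J where "J = ((Z y - Z x) - (S y - S x) / of_real y) - \<delta> * of_real (ln y - ln x - (1 - x/y))"
  have IG: "(G has_integral J) {x..y}" unfolding G_def J_def by (rule has_integral_diff[OF I1 I2])
  have I3: "((\<lambda>t. 2 * C * (1/(t * sqrt t))) has_integral (2 * C * (2/sqrt x - 2/sqrt y))) {x..y}"
    by (rule has_integral_mult_right[OF int_three_half[OF x0 xy(2)]])
  have Gb: "norm (G t) \<le> 2 * C * (1/(t * sqrt t))" if t: "t \<in> {x..y}" for t
  proof -
    have t1: "t \<ge> 1" "t > 0" using t xy by auto
    have "G t = ((S t - \<delta> * of_real t) - (S x - \<delta> * of_real x)) / of_real (t\<^sup>2)"
      using t1 by (simp add: G_def field_simps power2_eq_square)
    then have "norm (G t) = norm ((S t - \<delta> * of_real t) - (S x - \<delta> * of_real x)) / t\<^sup>2"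
      by (simp add: norm_divide norm_power)
    also have "\<dots> \<le> (C * sqrt t + C * sqrt x) / t\<^sup>2"
      using bnd[OF t1(1)] bnd[OF xy(1)] norm_triangle_ineq4[of "S t - \<delta> * of_real t" "S x - \<delta> * of_real x"]
      by (intro divide_right_mono) auto
    also have "\<dots> \<le> (2 * C * sqrt t) / t\<^sup>2"
      using t C0 by (intro divide_right_mono) (auto intro: mult_left_mono)
    also have "\<dots> = 2 * C * (1/(t * sqrt t))"
      using t1 by (simp add: field_simps power2_eq_square)
    finally show ?thesis .
  qed
  have NJ: "norm J \<le> 2 * C * (2/sqrt x - 2/sqrt y)"
    using integral_norm_bound_integral[OF has_integral_integrable[OF IG] has_integral_integrable[OF I3] Gb]
      IG I3 by (simp add: integral_unique)
  also have "\<dots> \<le> 4 * C / sqrt x"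
  proof -
    have "2*C*(2/sqrt x - 2/sqrt y) = 4*C/sqrt x - 4*(C/sqrt y)" by (simp add: algebra_simps)
    moreover have "0 \<le> C/sqrt y" using C0 xy by (intro divide_nonneg_nonneg) auto
    ultimately show ?thesis by linarith
  qed
  finally have NJ': "norm J \<le> 4 * C / sqrt x" .
  have key: "(Z y - \<delta> * of_real (ln y)) - (Z x - \<delta> * of_real (ln x))
     = J + ((S y - \<delta> * of_real y) - (S x - \<delta> * of_real x)) / of_real y"
    using xy by (simp add: J_def field_simps)
  have "norm (((S y - \<delta> * of_real y) - (S x - \<delta> * of_real x)) / of_real y) \<le> (C * sqrt y + C * sqrt x) / y"
    using bnd[of y] bnd[OF xy(1)] norm_triangle_ineq4[of "S y - \<delta> * of_real y" "S x - \<delta> * of_real x"] xy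
    by (simp add: norm_divide, intro divide_right_mono) auto
  also have "\<dots> \<le> 2 * C / sqrt x"
  proof -
    have "C * sqrt y / y \<le> C / sqrt x"
    proof -
      have "sqrt y / y = 1 / sqrt y" using xy by (simp add: field_simps)
      moreover have "1 / sqrt y \<le> 1 / sqrt x" using xy by (simp add: frac_le)
      ultimately show ?thesis using C0 by (metis mult_left_mono times_divide_eq_right mult.right_neutral)
    qed
    moreover have "C * sqrt x / y \<le> C / sqrt x"
    proof -
      have "sqrt x / y \<le> sqrt x / x" using xy by (simp add: frac_le)
      also have "sqrt x / x = 1 / sqrt x" using xy by (simp add: field_simps)
      finally show ?thesis using C0 by (metis mult_left_mono times_divide_eq_right mult.right_neutral)
    qed
    ultimately show ?thesis by (simp add: add_divide_distrib)
  qed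
  finally have "norm (((S y - \<delta> * of_real y) - (S x - \<delta> * of_real x)) / of_real y) \<le> 2 * C / sqrt x" .
  then show ?thesis unfolding key using NJ' norm_triangle_ineq[of J]
    by (smt (verit) add_divide_distrib)
qed



lemma cauchy_limit:
  fixes W :: "real \<Rightarrow> complex" and K :: real
  assumes H: "\<And>x y. 1 \<le> x \<Longrightarrow> x \<le> y \<Longrightarrow> norm (W y - W x) \<le> K / sqrt x"
  shows "\<exists>L. (W \<longlongrightarrow> L) at_top \<and> (\<forall>x\<ge>1. norm (W x - L) \<le> K / sqrt x)"
proof -
  define X where "X = (\<lambda>n::nat. W (real n + 1))"
  have lim0: "(\<lambda>n::nat. K / sqrt (real n + 1)) \<longlonglongrightarrow> 0" by real_asymp
  have HX: "norm (X m - X n) \<le> K / sqrt (real M + 1)" if "m \<ge> M" "n \<ge> M" for m n M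
  proof -
    have K0: "K \<ge> 0" using H[of 1 1] by simp
    have mono: "K / sqrt (real k + 1) \<le> K / sqrt (real M + 1)" if "k \<ge> M" for k
      using K0 that by (intro divide_left_mono) auto
    show ?thesis
    proof (cases "m \<le> n")
      case True
      then show ?thesis using H[of "real m + 1" "real n + 1"] mono[of m] that
        by (simp add: X_def norm_minus_commute)
    next
      case False
      then show ?thesis using H[of "real n + 1" "real m + 1"] mono[of n] that
        by (simp add: X_def)
    qed
  qed
  have "Cauchy X"
  proof (rule CauchyI)
    fix e :: real assume "0 < e"
    then have "eventually (\<lambda>n. K / sqrt (real n + 1) < e) sequentially"
      using lim0 by (simp add: order_tendstoD(2))
    then obtain M where "\<And>n. n \<ge> M \<Longrightarrow> K / sqrt (real n + 1) < e"
      by (auto simp: eventually_sequentially)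
    then show "\<exists>M. \<forall>m\<ge>M. \<forall>n\<ge>M. norm (X m - X n) < e"
      using HX by (meson le_less_trans order_refl)
  qed
  then obtain L where L: "X \<longlonglongrightarrow> L" using Cauchy_convergent_iff convergent_def by blast
  have bd: "norm (W x - L) \<le> K / sqrt x" if x: "x \<ge> 1" for x
  proof -
    have "(\<lambda>n. norm (X n - W x)) \<longlonglongrightarrow> norm (L - W x)"
      by (intro tendsto_intros L)
    moreover have "\<forall>n\<ge>nat \<lceil>x\<rceil>. norm (X n - W x) \<le> K / sqrt x"
    proof (intro allI impI)
      fix n assume "n \<ge> nat \<lceil>x\<rceil>"
      then have "x \<le> real n + 1" by linarith
      then show "norm (X n - W x) \<le> K / sqrt x" using H[OF x] by (simp add: X_def)
    qed
    ultimately have "norm (L - W x) \<le> K / sqrt x" by (rule Lim_bounded)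
    then show ?thesis by (simp add: norm_minus_commute)
  qed
  have "((\<lambda>x. W x - L) \<longlongrightarrow> 0) at_top"
  proof (rule Lim_null_comparison)
    show "eventually (\<lambda>x. norm (W x - L) \<le> K / sqrt x) at_top"
      using eventually_ge_at_top[of "1::real"] by (rule eventually_mono) (rule bd)
    show "((\<lambda>x. K / sqrt x) \<longlongrightarrow> 0) at_top" by real_asymp
  qed
  then have "(W \<longlongrightarrow> L) at_top" by (rule LIM_zero_cancel)
  then show ?thesis using bd by blast
qed



lemma geo_identity:
  fixes \<gamma> :: complex and p q :: int
  assumes "\<gamma> \<noteq> 0" "p - 1 \<le> q"
  shows "(1 - \<gamma>) * (\<Sum>j\<in>{p..q}. \<gamma> powi j) = \<gamma> powi p - \<gamma> powi (q + 1)"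
  using assms(2)
proof (induction q rule: int_ge_induct)
  case base
  then show ?case by simp
next
  case (step i)
  have "{p..i+1} = insert (i+1) {p..i}" using step.hyps by auto
  then have "(\<Sum>j\<in>{p..i+1}. \<gamma> powi j) = \<gamma> powi (i+1) + (\<Sum>j\<in>{p..i}. \<gamma> powi j)" by simp
  have pw: "\<gamma> powi (i+1+1) = \<gamma> powi (i+1) * \<gamma>" using assms(1) by (simp add: power_int_add power2_eq_square)
  have "(1-\<gamma>)*(\<Sum>j\<in>{p..i+1}. \<gamma> powi j) = (1-\<gamma>)*\<gamma> powi (i+1) + (1-\<gamma>)*(\<Sum>j\<in>{p..i}. \<gamma> powi j)"
    unfolding \<open>(\<Sum>j\<in>{p..i+1}. \<gamma> powi j) = _\<close> by (simp add: distrib_left)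
  also have "\<dots> = (1-\<gamma>)*\<gamma> powi (i+1) + (\<gamma> powi p - \<gamma> powi (i+1))" using step.IH by simp
  also have "\<dots> = \<gamma> powi p - \<gamma> powi (i+1) * \<gamma>" by (simp add: algebra_simps)
  finally show ?case using pw by simp
qed

lemma geo_bound:
  fixes \<gamma> :: complex and p q :: int
  assumes "norm \<gamma> = 1" "\<gamma> \<noteq> 1"
  shows "norm (\<Sum>j\<in>{p..q}. \<gamma> powi j) \<le> 2 / norm (1 - \<gamma>)"
proof (cases "p \<le> q")
  case False
  then show ?thesis by simp
next
  case True
  have g0: "\<gamma> \<noteq> 0" using assms by auto
  have n: "norm (1 - \<gamma>) > 0" using assms by simp
  have "norm (1 - \<gamma>) * norm (\<Sum>j\<in>{p..q}. \<gamma> powi j) = norm (\<gamma> powi p - \<gamma> powi (q + 1))"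
    using geo_identity[OF g0, of p q] True by (simp add: norm_mult[symmetric])
  also have "\<dots> \<le> norm (\<gamma> powi p) + norm (\<gamma> powi (q+1))" by (rule norm_triangle_ineq4)
  also have "\<dots> = 2" using assms by (simp add: norm_power_int)
  finally show ?thesis using n by (simp add: field_simps)
qed

lemma convex_int_set:
  fixes I :: "int set"
  assumes "finite I" "I \<noteq> {}" "\<And>i j l. i \<in> I \<Longrightarrow> l \<in> I \<Longrightarrow> i \<le> j \<Longrightarrow> j \<le> l \<Longrightarrow> j \<in> I"
  shows "I = {Min I..Max I}"
proof -
  have mi: "Min I \<in> I" and ma: "Max I \<in> I" using assms(1,2) by auto
  show ?thesis
  proof
    show "I \<subseteq> {Min I..Max I}" using assms(1) by auto
    show "{Min I..Max I} \<subseteq> I" using assms(3)[OF mi ma] by auto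
  qed
qed

lemma rows_bound:
  fixes P :: "int \<Rightarrow> int \<Rightarrow> bool" and K :: int and \<gamma> \<delta> :: complex
  assumes g: "norm \<gamma> = 1" "\<gamma> \<noteq> 1" and d: "norm \<delta> = 1" and K: "K \<ge> 0"
    and bd: "\<And>k j. P k j \<Longrightarrow> \<bar>k\<bar> \<le> K"
    and fin: "\<And>k. finite {j. P k j}"
    and cvx: "\<And>k i j l. P k i \<Longrightarrow> P k l \<Longrightarrow> i \<le> j \<Longrightarrow> j \<le> l \<Longrightarrow> P k j"
  shows "norm (\<Sum>(k,j)\<in>{(k,j). P k j}. \<delta> powi k * \<gamma> powi j) \<le> (2*K+1) * (2 / norm (1 - \<gamma>))"
proof -
  have eq: "{(k,j). P k j} = Sigma {-K..K} (\<lambda>k. {j. P k j})" using bd by fastforce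
  have "(\<Sum>(k,j)\<in>{(k,j). P k j}. \<delta> powi k * \<gamma> powi j) = (\<Sum>k\<in>{-K..K}. \<Sum>j\<in>{j. P k j}. \<delta> powi k * \<gamma> powi j)"
    unfolding eq by (rule sum.Sigma[symmetric]) (auto simp: fin)
  also have "\<dots> = (\<Sum>k\<in>{-K..K}. \<delta> powi k * (\<Sum>j\<in>{j. P k j}. \<gamma> powi j))"
    by (simp add: sum_distrib_left)
  finally have e: "(\<Sum>(k,j)\<in>{(k,j). P k j}. \<delta> powi k * \<gamma> powi j) = (\<Sum>k\<in>{-K..K}. \<delta> powi k * (\<Sum>j\<in>{j. P k j}. \<gamma> powi j))" .
  have inner: "norm (\<delta> powi k * (\<Sum>j\<in>{j. P k j}. \<gamma> powi j)) \<le> 2 / norm (1 - \<gamma>)" for k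
  proof (cases "{j. P k j} = {}")
    case True
    then show ?thesis by simp
  next
    case False
    have "{j. P k j} = {Min {j. P k j}..Max {j. P k j}}"
      by (rule convex_int_set[OF fin False]) (auto intro: cvx)
    then have "norm (\<Sum>j\<in>{j. P k j}. \<gamma> powi j) \<le> 2 / norm (1 - \<gamma>)"
      using geo_bound[OF g] by metis
    then show ?thesis using d by (simp add: norm_mult norm_power_int)
  qed
  have "norm (\<Sum>k\<in>{-K..K}. \<delta> powi k * (\<Sum>j\<in>{j. P k j}. \<gamma> powi j)) \<le> (\<Sum>k\<in>{-K..K}. 2 / norm (1 - \<gamma>))"
    by (rule sum_norm_le) (rule inner)
  also have "\<dots> = (2*K+1) * (2 / norm (1 - \<gamma>))" using K by simp
  finally show ?thesis unfolding e .
qed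

lemma quad_convex:
  fixes A B C t u1 u u2 :: real
  assumes A: "A \<ge> 0" and u: "u1 \<le> u" "u \<le> u2"
    and f1: "A*u1^2 + B*u1 + C \<le> t" and f2: "A*u2^2 + B*u2 + C \<le> t"
  shows "A*u^2 + B*u + C \<le> t"
proof (cases "u1 = u2")
  case True
  then show ?thesis using u f1 by simp
next
  case False
  then have d: "u2 - u1 > 0" using u by simp
  have id: "(u2-u1)*(A*u^2+B*u+C) = (u2-u)*(A*u1^2+B*u1+C) + (u-u1)*(A*u2^2+B*u2+C) + A*((u-u1)*(u-u2))*(u2-u1)"
    by (simp add: power2_eq_square algebra_simps)
  have "(u-u1)*(u-u2) \<le> 0" using u by (simp add: mult_nonneg_nonpos)
  then have "A*((u-u1)*(u-u2))*(u2-u1) \<le> 0" using A d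
    by (simp add: mult_nonneg_nonpos mult_nonpos_nonneg)
  moreover have "(u2-u)*(A*u1^2+B*u1+C) \<le> (u2-u)*t" using u f1 by (intro mult_left_mono) auto
  moreover have "(u-u1)*(A*u2^2+B*u2+C) \<le> (u-u1)*t" using u f2 by (intro mult_left_mono) auto
  ultimately have "(u2-u1)*(A*u^2+B*u+C) \<le> (u2-u1)*t" unfolding id by (simp add: algebra_simps)
  then show ?thesis using d by simp
qed

lemma card_int_interval:
  fixes c w :: real assumes "w \<ge> 0"
  shows "\<bar>real (card {m::int. \<bar>of_int m - c\<bar> \<le> w}) - 2*w\<bar> \<le> 1"
proof -
  have e: "{m::int. \<bar>of_int m - c\<bar> \<le> w} = {\<lceil>c - w\<rceil>..\<lfloor>c + w\<rfloor>}"
    by (auto simp: abs_le_iff ceiling_le_iff le_floor_iff)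
  have a: "of_int \<lfloor>c + w\<rfloor> > c + w - 1" "of_int \<lfloor>c + w\<rfloor> \<le> c + w" by linarith+
  have b: "of_int \<lceil>c - w\<rceil> < c - w + 1" "of_int \<lceil>c - w\<rceil> \<ge> c - w" by linarith+
  have nn: "\<lfloor>c + w\<rfloor> - \<lceil>c - w\<rceil> + 1 \<ge> 0" using a b assms by linarith
  have "real (card {\<lceil>c - w\<rceil>..\<lfloor>c + w\<rfloor>}) = of_int (\<lfloor>c + w\<rfloor> - \<lceil>c - w\<rceil> + 1)"
    using nn by simp
  then show ?thesis unfolding e using a b by linarith
qed

lemma sym_sum:
  fixes h :: "nat \<Rightarrow> real"
  shows "(\<Sum>n\<in>{-int N..int N}. h (nat \<bar>n\<bar>)) = 2 * (\<Sum>k\<le>N. h k) - h 0"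
proof (induction N)
  case 0
  then show ?case by simp
next
  case (Suc N)
  have e: "{-int (Suc N)..int (Suc N)} = insert (int (Suc N)) (insert (- int (Suc N)) {-int N..int N})"
    by auto
  have "nat (1 + int N) = Suc N" "nat (int N + 1) = Suc N" by auto
  then show ?case unfolding e using Suc by simp
qed



lemma G_deriv:
  fixes b R z :: real
  assumes b: "b > 0" and R: "R > 0" and z: "0 < z" "z < R/b"
  shows "((\<lambda>u. (u * sqrt (R\<^sup>2 - (b*u)\<^sup>2) + R\<^sup>2/b * arcsin (b*u/R)) / 2) has_real_derivative sqrt (R\<^sup>2 - (b*z)\<^sup>2)) (at z)"
proof -
  have bz: "b*z < R" "0 < b*z" using z b by (auto simp: field_simps)
  have p: "0 < R\<^sup>2 - (b*z)\<^sup>2" using bz by (simp add: power_strict_mono)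
  have q: "-1 < b*z/R" "b*z/R < 1" using bz R by (auto simp: field_simps)
  define w where "w = sqrt (R\<^sup>2 - (b*z)\<^sup>2)"
  have w0: "w > 0" using p by (simp add: w_def)
  have w2: "w\<^sup>2 = R\<^sup>2 - (b*z)\<^sup>2" using p by (simp add: w_def)
  have s: "sqrt (1 - (b*z/R)\<^sup>2) = w / R"
  proof -
    have "1 - (b*z/R)\<^sup>2 = (R\<^sup>2 - (b*z)\<^sup>2) / R\<^sup>2" using R by (simp add: field_simps power2_eq_square)
    then show ?thesis using R by (simp add: w_def real_sqrt_divide)
  qed
  have d1: "((\<lambda>u. R\<^sup>2 - (b*u)\<^sup>2) has_real_derivative (- (2*b*b*z))) (at z)"
    by (auto intro!: derivative_eq_intros simp: power2_eq_square)
  have d2: "((\<lambda>u. sqrt (R\<^sup>2 - (b*u)\<^sup>2)) has_real_derivative (inverse w / 2 * (- (2*b*b*z)))) (at z)"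
    using DERIV_chain2[OF DERIV_real_sqrt[OF p] d1] by (simp add: w_def)
  have d3: "((\<lambda>u. u * sqrt (R\<^sup>2 - (b*u)\<^sup>2)) has_real_derivative (1 * w + (inverse w / 2 * (- (2*b*b*z))) * z)) (at z)"
    using DERIV_mult[OF DERIV_ident d2] by (simp add: w_def)
  have d4: "((\<lambda>u. b*u/R) has_real_derivative b/R) (at z)"
    using R by (auto intro!: derivative_eq_intros)
  have d5: "((\<lambda>u. arcsin (b*u/R)) has_real_derivative (inverse (w/R) * (b/R))) (at z)"
    using DERIV_chain2[OF DERIV_arcsin[OF q] d4] by (simp add: s)
  have d6: "((\<lambda>u. (u * sqrt (R\<^sup>2 - (b*u)\<^sup>2) + R\<^sup>2/b * arcsin (b*u/R)) / 2) has_real_derivative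
      ((1 * w + (inverse w / 2 * (- (2*b*b*z))) * z) + R\<^sup>2/b * (inverse (w/R) * (b/R))) / 2) (at z)"
    by (intro DERIV_cdivide DERIV_add d3 DERIV_cmult d5)
  have e: "((1 * w + (inverse w / 2 * (- (2*b*b*z))) * z) + R\<^sup>2/b * (inverse (w/R) * (b/R))) / 2 = w"
  proof -
    have "((1 * w + (inverse w / 2 * (- (2*b*b*z))) * z) + R\<^sup>2/b * (inverse (w/R) * (b/R))) / 2
        = (w\<^sup>2 - (b*z)\<^sup>2 + R\<^sup>2) / (2*w)"
      using w0 b R by (simp add: field_simps power2_eq_square)
    also have "\<dots> = w" using w2 w0 by (simp add: field_simps power2_eq_square)
    finally show ?thesis .
  qed
  have "((\<lambda>u. (u * sqrt (R\<^sup>2 - (b*u)\<^sup>2) + R\<^sup>2/b * arcsin (b*u/R)) / 2) has_real_derivative w) (at z)"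
    using d6 unfolding e .
  then show ?thesis by (simp only: w_def)
qed

definition gf :: "real \<Rightarrow> real \<Rightarrow> real \<Rightarrow> real" where
  "gf b R u = sqrt (R\<^sup>2 - (b*u)\<^sup>2)"

definition Gf :: "real \<Rightarrow> real \<Rightarrow> real \<Rightarrow> real" where
  "Gf b R u = (u * gf b R u + R\<^sup>2/b * arcsin (b*u/R)) / 2"

lemma gf_mono:
  fixes b R u v :: real
  assumes "b > 0" "0 \<le> u" "u \<le> v"
  shows "gf b R v \<le> gf b R u"
proof -
  have "(b*u)\<^sup>2 \<le> (b * v)\<^sup>2" using assms by (intro power_mono) auto
  then show ?thesis unfolding gf_def by simp
qed

lemma gf_nonneg:
  assumes "b > 0" "R > 0" "0 \<le> u" "u \<le> R/b"
  shows "gf b R u \<ge> 0"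
proof -
  have "b*u \<le> R" using assms by (simp add: field_simps)
  then have "(b*u)\<^sup>2 \<le> R\<^sup>2" using assms by (intro power_mono) auto
  then show ?thesis unfolding gf_def by simp
qed

lemma Gf_cont:
  assumes b: "b > 0" and R: "R > 0"
  shows "continuous_on {0..R/b} (Gf b R)"
proof -
  have h: "\<forall>u\<in>{0..R/b}. -1 \<le> b*u/R \<and> b*u/R \<le> 1"
  proof
    fix u assume u: "u \<in> {0..R/b}"
    then have "0 \<le> b*u/R" using b R by simp
    moreover have "b*u \<le> R" using u b by (simp add: field_simps)
    then have "b*u/R \<le> 1" using R by simp
    ultimately show "-1 \<le> b*u/R \<and> b*u/R \<le> 1" by linarith
  qed
  show ?thesis unfolding Gf_def gf_def
    by (intro continuous_intros h) (use R in auto)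
qed

lemma Gf_mvt:
  assumes b: "b > 0" and R: "R > 0" and pq: "0 \<le> p" "p \<le> q" "q \<le> R/b"
  shows "gf b R q * (q - p) \<le> Gf b R q - Gf b R p \<and> Gf b R q - Gf b R p \<le> gf b R p * (q - p)"
proof (cases "p = q")
  case True
  then show ?thesis by simp
next
  case False
  then have lt: "p < q" using pq by simp
  have cont: "continuous_on {p..q} (Gf b R)"
    by (rule continuous_on_subset[OF Gf_cont[OF b R]]) (use pq in auto)
  have der: "(Gf b R has_real_derivative gf b R z) (at z)" if "p < z" "z < q" for z
    unfolding Gf_def[abs_def] gf_def using G_deriv[OF b R, of z] that pq by simp
  obtain l z where z: "p < z" "z < q" and dz: "(Gf b R has_real_derivative l) (at z)"
    and eq: "Gf b R q - Gf b R p = (q - p) * l"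
    using MVT[OF lt cont] der real_differentiable_def by blast
  have "l = gf b R z" using DERIV_unique[OF dz der[OF z]] .
  moreover have "gf b R q \<le> gf b R z" "gf b R z \<le> gf b R p"
    using z pq b by (auto intro: gf_mono)
  ultimately show ?thesis using eq lt
    by (simp add: mult.commute mult_right_mono)
qed

lemma Gf_0: "Gf b R 0 = 0" by (simp add: Gf_def)

lemma Gf_end:
  assumes "b > 0" "R > 0"
  shows "Gf b R (R/b) = pi * R\<^sup>2 / (4*b)"
  using assms by (simp add: Gf_def gf_def)

lemma sum_shift_aux:
  fixes f :: "nat \<Rightarrow> real"
  shows "(\<Sum>k\<le>N. f k) = f 0 + (\<Sum>k<N. f (Suc k))"
  by (induction N) auto

lemma gf_sum:
  assumes b: "b > 0" and R: "R > 0"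
  defines "N \<equiv> nat \<lfloor>R/b\<rfloor>"
  shows "(\<Sum>k\<le>N. gf b R (real k)) - R \<le> pi * R\<^sup>2 / (4*b)
       \<and> pi * R\<^sup>2 / (4*b) \<le> (\<Sum>k\<le>N. gf b R (real k))"
proof -
  let ?K = "R/b"
  have K0: "?K > 0" using b R by simp
  have NK: "real N \<le> ?K" "?K < real N + 1" unfolding N_def using K0 by linarith+
  have tel: "Gf b R (real N) - Gf b R 0 = (\<Sum>k<N. Gf b R (real (Suc k)) - Gf b R (real k))"
    using sum_lessThan_telescope[of "\<lambda>k. Gf b R (real k)" N] by simp
  have step: "gf b R (real (Suc k)) \<le> Gf b R (real (Suc k)) - Gf b R (real k)
      \<and> Gf b R (real (Suc k)) - Gf b R (real k) \<le> gf b R (real k)" if "k < N" for k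
  proof -
    have "real (Suc k) \<le> ?K" using that NK by linarith
    then show ?thesis using Gf_mvt[OF b R, of "real k" "real (Suc k)"] by simp
  qed
  have lo1: "(\<Sum>k<N. gf b R (real (Suc k))) \<le> Gf b R (real N) - Gf b R 0"
    unfolding tel by (rule sum_mono) (use step in auto)
  have hi1: "Gf b R (real N) - Gf b R 0 \<le> (\<Sum>k<N. gf b R (real k))"
    unfolding tel by (rule sum_mono) (use step in auto)
  have last: "0 \<le> Gf b R ?K - Gf b R (real N) \<and> Gf b R ?K - Gf b R (real N) \<le> gf b R (real N)"
  proof -
    have m: "gf b R ?K * (?K - real N) \<le> Gf b R ?K - Gf b R (real N) \<and> Gf b R ?K - Gf b R (real N) \<le> gf b R (real N) * (?K - real N)"
      using Gf_mvt[OF b R, of "real N" ?K] NK by simp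
    have g1: "gf b R ?K \<ge> 0" using gf_nonneg[OF b R] K0 by simp
    have g2: "gf b R (real N) \<ge> 0" using gf_nonneg[OF b R] NK by simp
    have "gf b R (real N) * (?K - real N) \<le> gf b R (real N) * 1"
      using g2 NK by (intro mult_left_mono) auto
    moreover have "0 \<le> gf b R ?K * (?K - real N)" using g1 NK by simp
    ultimately show ?thesis using m by linarith
  qed
  have s1: "(\<Sum>k\<le>N. gf b R (real k)) = gf b R 0 + (\<Sum>k<N. gf b R (real (Suc k)))"
    using sum_shift_aux[of "\<lambda>k. gf b R (real k)" N] by (simp del: of_nat_Suc)
  have s2: "(\<Sum>k\<le>N. gf b R (real k)) = (\<Sum>k<N. gf b R (real k)) + gf b R (real N)"
    by (simp add: lessThan_Suc_atMost[symmetric] del: lessThan_Suc_atMost)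
  have g0: "gf b R 0 = R" using R by (simp add: gf_def)
  have "Gf b R ?K = pi * R\<^sup>2 / (4*b)" by (rule Gf_end[OF b R])
  then show ?thesis using lo1 hi1 last s1 s2 g0 Gf_0[of b R] by linarith
qed



definition phi :: "complex \<Rightarrow> int \<times> int \<Rightarrow> complex" where
  "phi \<tau> p = of_int (snd p) + of_int (fst p) * \<tau>"

definition Rset :: "complex \<Rightarrow> real \<Rightarrow> (int \<times> int) set" where
  "Rset \<tau> t = {(n,m). (of_int m + of_int n * Re \<tau>)\<^sup>2 + (of_int n * Im \<tau>)\<^sup>2 \<le> t}"

lemma norm_phi: "(cmod (phi \<tau> (n,m)))\<^sup>2 = (of_int m + of_int n * Re \<tau>)\<^sup>2 + (of_int n * Im \<tau>)\<^sup>2"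
proof -
  have re: "Re (phi \<tau> (n,m)) = of_int m + of_int n * Re \<tau>" by (simp add: phi_def)
  have im: "Im (phi \<tau> (n,m)) = of_int n * Im \<tau>" by (simp add: phi_def)
  show ?thesis by (simp only: cmod_power2 re im)
qed

lemma lattice_eq: "lattice \<tau> = range (phi \<tau>)"
  by (auto simp: lattice_def phi_def image_def)

lemma inj_phi: assumes "Im \<tau> \<noteq> 0" shows "inj (phi \<tau>)"
proof (rule injI)
  fix p q assume e: "phi \<tau> p = phi \<tau> q"
  obtain n m n' m' where p: "p = (n,m)" and q: "q = (n',m')" by (cases p, cases q)
  have "Im (phi \<tau> p) = Im (phi \<tau> q)" using e by simp
  then have "of_int n * Im \<tau> = of_int n' * Im \<tau>" by (simp add: phi_def p q)
  then have nn: "n = n'" using assms by simp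
  have "Re (phi \<tau> p) = Re (phi \<tau> q)" using e by simp
  then have "m = m'" using nn by (simp add: phi_def p q)
  then show "p = q" using nn p q by simp
qed

lemma sq_bound:
  fixes x y R :: real
  assumes "x\<^sup>2 + y\<^sup>2 \<le> R\<^sup>2" "R \<ge> 0"
  shows "\<bar>x\<bar> \<le> R" "\<bar>y\<bar> \<le> R"
proof -
  have x2': "x\<^sup>2 \<le> R\<^sup>2" using assms(1) zero_le_power2[of y] by linarith
  have y2': "y\<^sup>2 \<le> R\<^sup>2" using assms(1) zero_le_power2[of x] by linarith
  have x2: "\<bar>x\<bar>\<^sup>2 \<le> R\<^sup>2" using x2' by simp
  have y2: "\<bar>y\<bar>\<^sup>2 \<le> R\<^sup>2" using y2' by simp
  show "\<bar>x\<bar> \<le> R" by (rule power2_le_imp_le[OF x2 assms(2)])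
  show "\<bar>y\<bar> \<le> R" by (rule power2_le_imp_le[OF y2 assms(2)])
qed

lemma Rset_bound:
  fixes \<tau> :: complex and R :: real
  assumes b: "Im \<tau> > 0" and R: "R \<ge> 0" and p: "(n,m) \<in> Rset \<tau> (R\<^sup>2)"
  shows "\<bar>of_int n\<bar> \<le> R / Im \<tau> \<and> \<bar>of_int m\<bar> \<le> R + R * \<bar>Re \<tau>\<bar> / Im \<tau>"
proof -
  define a where "a = Re \<tau>"
  define bb where "bb = Im \<tau>"
  define x where "x = (of_int m + of_int n * a :: real)"
  define y where "y = (of_int n * bb :: real)"
  have h: "x\<^sup>2 + y\<^sup>2 \<le> R\<^sup>2" using p by (simp add: Rset_def x_def y_def a_def bb_def)
  have bx: "\<bar>x\<bar> \<le> R" and yb: "\<bar>y\<bar> \<le> R" using sq_bound[OF h R] by auto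
  have b': "bb > 0" using b by (simp add: bb_def)
  have n: "\<bar>of_int n\<bar> * bb \<le> R" using yb b' by (simp add: y_def abs_mult)
  then have n': "\<bar>(of_int n::real)\<bar> \<le> R / bb" using b' by (simp add: field_simps)
  have "\<bar>of_int n * a\<bar> = \<bar>(of_int n::real)\<bar> * \<bar>a\<bar>" by (simp add: abs_mult)
  also have "\<dots> \<le> R / bb * \<bar>a\<bar>" using n' by (intro mult_right_mono) auto
  finally have na: "\<bar>of_int n * a\<bar> \<le> R * \<bar>a\<bar> / bb" by simp
  have "(of_int m::real) = x - of_int n * a" by (simp add: x_def)
  then have "\<bar>(of_int m::real)\<bar> \<le> \<bar>x\<bar> + \<bar>of_int n * a\<bar>" by (simp add: abs_triangle_ineq4)
  then have "\<bar>(of_int m::real)\<bar> \<le> R + R * \<bar>a\<bar> / bb" using bx na by linarith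
  then show ?thesis using n' by (simp only: a_def bb_def)
qed

lemma int_abs_le_floor:
  fixes n :: int and x :: real
  assumes "\<bar>of_int n\<bar> \<le> x"
  shows "\<bar>n\<bar> \<le> \<lfloor>x\<rfloor>"
  using assms by (simp add: le_floor_iff)

lemma finite_Rset:
  assumes b: "Im \<tau> > 0"
  shows "finite (Rset \<tau> t)"
proof (cases "t < 0")
  case True
  have nn: "(of_int m + of_int n * Re \<tau>)\<^sup>2 + (of_int n * Im \<tau>)\<^sup>2 \<ge> 0" for n m :: int by simp
  have "p \<notin> Rset \<tau> t" for p
  proof (cases p)
    case (Pair n m)
    have "\<not> (of_int m + of_int n * Re \<tau>)\<^sup>2 + (of_int n * Im \<tau>)\<^sup>2 \<le> t" using nn[of m n] True by linarith
    then show ?thesis unfolding Pair Rset_def by simp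
  qed
  then have "Rset \<tau> t = {}" by blast
  then show ?thesis by simp
next
  case False
  define R where "R = sqrt t"
  have R: "R \<ge> 0" "R\<^sup>2 = t" using False by (auto simp: R_def)
  let ?N = "\<lfloor>R / Im \<tau>\<rfloor>" and ?M = "\<lfloor>R + R * \<bar>Re \<tau>\<bar> / Im \<tau>\<rfloor>"
  have "Rset \<tau> t \<subseteq> {-?N..?N} \<times> {-?M..?M}"
  proof
    fix p assume "p \<in> Rset \<tau> t"
    moreover obtain n m where p: "p = (n,m)" by (cases p)
    ultimately have p2: "(n,m) \<in> Rset \<tau> (R\<^sup>2)" using R by simp
    have "\<bar>n\<bar> \<le> ?N" "\<bar>m\<bar> \<le> ?M"
      using Rset_bound[OF b R(1) p2] by (simp_all only: int_abs_le_floor)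
    then show "p \<in> {-?N..?N} \<times> {-?M..?M}" unfolding p by (simp add: abs_le_iff)
  qed
  then show ?thesis by (rule finite_subset) simp
qed

lemma A_eq:
  assumes b: "Im \<tau> > 0"
  shows "{\<mu>\<in>lattice \<tau>. \<mu> \<noteq> 0 \<and> (cmod \<mu>)\<^sup>2 \<le> t} = phi \<tau> ` (Rset \<tau> t - {(0,0)})"
proof -
  have inj: "inj (phi \<tau>)" using inj_phi[of \<tau>] b by simp
  have z: "phi \<tau> (0,0) = 0" by (simp add: phi_def)
  have p0: "phi \<tau> p = 0 \<longleftrightarrow> p = (0,0)" for p
    using inj_eq[OF inj, of p "(0,0)"] unfolding z .
  have r: "p \<in> Rset \<tau> t \<longleftrightarrow> (cmod (phi \<tau> p))\<^sup>2 \<le> t" for p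
  proof (cases p)
    case (Pair n m)
    show ?thesis unfolding Pair Rset_def norm_phi mem_Collect_eq case_prod_conv ..
  qed
  show ?thesis
  proof
    show "{\<mu>\<in>lattice \<tau>. \<mu> \<noteq> 0 \<and> (cmod \<mu>)\<^sup>2 \<le> t} \<subseteq> phi \<tau> ` (Rset \<tau> t - {(0,0)})"
    proof
      fix \<mu> assume mu: "\<mu> \<in> {\<mu>\<in>lattice \<tau>. \<mu> \<noteq> 0 \<and> (cmod \<mu>)\<^sup>2 \<le> t}"
      then have "\<mu> \<in> range (phi \<tau>)" unfolding lattice_eq by simp
      then obtain p where p: "\<mu> = phi \<tau> p" by (rule rangeE)
      have "p \<in> Rset \<tau> t - {(0,0)}" using mu p0[of p] r[of p] unfolding p by simp
      then show "\<mu> \<in> phi \<tau> ` (Rset \<tau> t - {(0,0)})" unfolding p by (rule imageI)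
    qed
    show "phi \<tau> ` (Rset \<tau> t - {(0,0)}) \<subseteq> {\<mu>\<in>lattice \<tau>. \<mu> \<noteq> 0 \<and> (cmod \<mu>)\<^sup>2 \<le> t}"
    proof
      fix \<mu> assume "\<mu> \<in> phi \<tau> ` (Rset \<tau> t - {(0,0)})"
      then obtain p where p: "\<mu> = phi \<tau> p" "p \<in> Rset \<tau> t" "p \<noteq> (0,0)" by blast
      have "\<mu> \<in> lattice \<tau>" unfolding lattice_eq p by (rule rangeI)
      then show "\<mu> \<in> {\<mu>\<in>lattice \<tau>. \<mu> \<noteq> 0 \<and> (cmod \<mu>)\<^sup>2 \<le> t}"
        using p p0[of p] r[of p] by simp
    qed
  qed
qed

lemma sum_A:
  fixes f :: "complex \<Rightarrow> complex"
  assumes b: "Im \<tau> > 0" and t: "t \<ge> 0"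
  shows "(\<Sum>\<mu>\<in>{\<mu>\<in>lattice \<tau>. \<mu> \<noteq> 0 \<and> (cmod \<mu>)\<^sup>2 \<le> t}. f \<mu>) = (\<Sum>p\<in>Rset \<tau> t. f (phi \<tau> p)) - f 0"
proof -
  have inj: "inj_on (phi \<tau>) (Rset \<tau> t - {(0,0)})" using inj_phi[of \<tau>] b by (auto intro: inj_on_subset)
  have in0: "(0,0) \<in> Rset \<tau> t" using t by (simp add: Rset_def)
  have "(\<Sum>\<mu>\<in>{\<mu>\<in>lattice \<tau>. \<mu> \<noteq> 0 \<and> (cmod \<mu>)\<^sup>2 \<le> t}. f \<mu>) = (\<Sum>p\<in>Rset \<tau> t - {(0,0)}. f (phi \<tau> p))"
    unfolding A_eq[OF b] by (rule sum.reindex[OF inj, unfolded comp_def])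
  also have "\<dots> = (\<Sum>p\<in>Rset \<tau> t. f (phi \<tau> p)) - f (phi \<tau> (0,0))"
    using in0 finite_Rset[OF b] by (simp add: sum_diff1)
  also have "phi \<tau> (0,0) = 0" by (simp add: phi_def)
  finally show ?thesis .
qed

lemma finite_A:
  assumes b: "Im \<tau> > 0"
  shows "finite {\<mu>\<in>lattice \<tau>. \<mu> \<noteq> 0 \<and> (cmod \<mu>)\<^sup>2 \<le> t}"
  unfolding A_eq[OF b] using finite_Rset[OF b] by simp



lemma lattice_mem: "of_int m + of_int n * \<tau> \<in> lattice \<tau>"
  unfolding lattice_def by blast

lemma lattice_cases:
  assumes "\<mu> \<in> lattice \<tau>" obtains m n where "\<mu> = of_int m + of_int n * \<tau>"
  using assms unfolding lattice_def by blast

lemma lattice_add: "\<mu> \<in> lattice \<tau> \<Longrightarrow> \<nu> \<in> lattice \<tau> \<Longrightarrow> \<mu> + \<nu> \<in> lattice \<tau>"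
proof -
  assume a: "\<mu> \<in> lattice \<tau>" "\<nu> \<in> lattice \<tau>"
  obtain m n where 1: "\<mu> = of_int m + of_int n * \<tau>" using a(1) by (rule lattice_cases)
  obtain m' n' where 2: "\<nu> = of_int m' + of_int n' * \<tau>" using a(2) by (rule lattice_cases)
  have "\<mu> + \<nu> = of_int (m + m') + of_int (n + n') * \<tau>" unfolding 1 2 by (simp add: algebra_simps)
  then show ?thesis using lattice_mem by metis
qed

lemma lattice_smult: "\<mu> \<in> lattice \<tau> \<Longrightarrow> of_int k * \<mu> \<in> lattice \<tau>"
proof -
  assume a: "\<mu> \<in> lattice \<tau>"
  obtain m n where 1: "\<mu> = of_int m + of_int n * \<tau>" using a by (rule lattice_cases)
  have "of_int k * \<mu> = of_int (k * m) + of_int (k * n) * \<tau>" unfolding 1 by (simp add: algebra_simps)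
  then show ?thesis using lattice_mem by metis
qed

lemma lattice_0: "0 \<in> lattice \<tau>" using lattice_mem[of 0 0 \<tau>] by simp
lemma lattice_1: "1 \<in> lattice \<tau>" using lattice_mem[of 1 0 \<tau>] by simp
lemma lattice_tau: "\<tau> \<in> lattice \<tau>" using lattice_mem[of 0 1 \<tau>] by simp

lemma psi_0:
  assumes "is_character \<tau> \<psi>" shows "\<psi> 0 = 1"
proof -
  have n: "norm (\<psi> 0) = 1" and m: "\<psi> (0 + 0) = \<psi> 0 * \<psi> 0"
    using assms lattice_0 unfolding is_character_def by blast+
  then have "\<psi> 0 \<noteq> 0" by auto
  then show ?thesis using m by simp
qed

lemma psi_nat:
  assumes c: "is_character \<tau> \<psi>" and mu: "\<mu> \<in> lattice \<tau>"
  shows "\<psi> (of_nat k * \<mu>) = \<psi> \<mu> ^ k"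
proof (induction k)
  case 0
  then show ?case using psi_0[OF c] by simp
next
  case (Suc k)
  have mem: "of_nat k * \<mu> \<in> lattice \<tau>" using lattice_smult[OF mu, of "int k"] by simp
  have "\<psi> (of_nat (Suc k) * \<mu>) = \<psi> (of_nat k * \<mu> + \<mu>)" by (simp add: algebra_simps)
  also have "\<dots> = \<psi> (of_nat k * \<mu>) * \<psi> \<mu>" using c mem mu unfolding is_character_def by blast
  finally show ?case using Suc by simp
qed

lemma psi_neg:
  assumes c: "is_character \<tau> \<psi>" and mu: "\<mu> \<in> lattice \<tau>"
  shows "\<psi> (- \<mu>) = inverse (\<psi> \<mu>)"
proof -
  have mem: "- \<mu> \<in> lattice \<tau>" using lattice_smult[OF mu, of "-1"] by simp
  have "\<psi> (\<mu> + - \<mu>) = \<psi> \<mu> * \<psi> (- \<mu>)" using c mem mu unfolding is_character_def by blast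
  then have "\<psi> \<mu> * \<psi> (- \<mu>) = 1" using psi_0[OF c] by simp
  then show ?thesis by (metis inverse_unique)
qed

lemma psi_int:
  assumes c: "is_character \<tau> \<psi>" and mu: "\<mu> \<in> lattice \<tau>"
  shows "\<psi> (of_int k * \<mu>) = \<psi> \<mu> powi k"
proof (cases "k \<ge> 0")
  case True
  then obtain j where k: "k = int j" by (metis nonneg_eq_int)
  show ?thesis unfolding k using psi_nat[OF c mu, of j] by simp
next
  case False
  then obtain j where k: "k = - int j" by (metis neg_0_le_iff_le nonneg_eq_int nle_le add.inverse_inverse)
  have mem: "of_nat j * \<mu> \<in> lattice \<tau>" using lattice_smult[OF mu, of "int j"] by simp
  have "\<psi> (of_int k * \<mu>) = \<psi> (- (of_nat j * \<mu>))" unfolding k by simp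
  also have "\<dots> = inverse (\<psi> \<mu> ^ j)" using psi_neg[OF c mem] psi_nat[OF c mu] by simp
  also have "\<dots> = \<psi> \<mu> powi k" unfolding k by (simp add: power_int_minus)
  finally show ?thesis .
qed

lemma psi_phi:
  assumes c: "is_character \<tau> \<psi>"
  shows "\<psi> (phi \<tau> (n,m)) = \<psi> 1 powi m * \<psi> \<tau> powi n"
proof -
  have "\<psi> (phi \<tau> (n,m)) = \<psi> (of_int m * 1 + of_int n * \<tau>)" by (simp add: phi_def)
  also have "\<dots> = \<psi> (of_int m * 1) * \<psi> (of_int n * \<tau>)"
    using c lattice_smult[OF lattice_1] lattice_smult[OF lattice_tau] unfolding is_character_def by blast
  also have "\<dots> = \<psi> 1 powi m * \<psi> \<tau> powi n"
    using psi_int[OF c lattice_1] psi_int[OF c lattice_tau] by simp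
  finally show ?thesis .
qed

lemma sq_le_sqrt_iff:
  fixes x y :: real assumes "y \<ge> 0" shows "x\<^sup>2 \<le> y \<longleftrightarrow> \<bar>x\<bar> \<le> sqrt y"
proof -
  have "x\<^sup>2 \<le> y \<longleftrightarrow> sqrt (x\<^sup>2) \<le> sqrt y" by (simp only: real_sqrt_le_iff)
  then show ?thesis by (simp only: real_sqrt_abs)
qed

lemma count_bound:
  fixes \<tau> :: complex and R :: real
  assumes b: "Im \<tau> > 0" and R: "R \<ge> 1"
  shows "\<bar>real (card (Rset \<tau> (R\<^sup>2))) - pi * R\<^sup>2 / Im \<tau>\<bar> \<le> (3 + 2 / Im \<tau>) * R"
proof -
  define a where "a = Re \<tau>"
  define bb where "bb = Im \<tau>"
  have b': "bb > 0" using b by (simp add: bb_def)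
  have R0: "R > 0" using R by simp
  define N where "N = nat \<lfloor>R / bb\<rfloor>"
  have NR: "real N \<le> R / bb" unfolding N_def using b' R0 by (simp add: divide_nonneg_nonneg)
  have NN: "int N = \<lfloor>R / bb\<rfloor>" unfolding N_def using b' R0 by (simp add: divide_nonneg_nonneg)
  define Row where "Row = (\<lambda>n::int. {m::int. (of_int m + of_int n * a)\<^sup>2 + (of_int n * bb)\<^sup>2 \<le> R\<^sup>2})"
  define w where "w = (\<lambda>n::int. gf bb R (real (nat \<bar>n\<bar>)))"
  have eqS: "Rset \<tau> (R\<^sup>2) = Sigma {-int N..int N} Row"
  proof
    show "Rset \<tau> (R\<^sup>2) \<subseteq> Sigma {-int N..int N} Row"
    proof
      fix p assume p: "p \<in> Rset \<tau> (R\<^sup>2)"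
      obtain n m where pe: "p = (n,m)" by (cases p)
      have "\<bar>of_int n\<bar> \<le> R / bb" using Rset_bound[OF b _ p[unfolded pe]] R by (simp add: bb_def)
      then have "\<bar>n\<bar> \<le> int N" unfolding NN by (rule int_abs_le_floor)
      moreover have "m \<in> Row n" using p unfolding pe Row_def Rset_def a_def bb_def by simp
      ultimately show "p \<in> Sigma {-int N..int N} Row" unfolding pe by auto
    qed
    show "Sigma {-int N..int N} Row \<subseteq> Rset \<tau> (R\<^sup>2)"
      unfolding Row_def Rset_def a_def bb_def by auto
  qed
  have rowI: "Row n = {m. \<bar>of_int m - (- (of_int n * a))\<bar> \<le> w n}" if n: "n \<in> {-int N..int N}" for n
  proof -
    have "\<bar>n\<bar> \<le> int N" using n by auto
    then have "real_of_int \<bar>n\<bar> \<le> real N" by linarith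
    then have "\<bar>of_int n\<bar> * bb \<le> real N * bb" using b' by (intro mult_right_mono) auto
    also have "real N * bb \<le> R" using NR b' by (simp add: field_simps)
    finally have "\<bar>of_int n\<bar> * bb \<le> R" .
    then have "(\<bar>of_int n\<bar> * bb)\<^sup>2 \<le> R\<^sup>2" using b' by (intro power_mono) auto
    moreover have "(of_int n * bb)\<^sup>2 = (\<bar>of_int n\<bar> * bb)\<^sup>2" by (simp add: power_mult_distrib)
    ultimately have "(of_int n * bb)\<^sup>2 \<le> R\<^sup>2" by simp
    then have nn: "R\<^sup>2 - (of_int n * bb)\<^sup>2 \<ge> 0" by simp
    have wn: "w n = sqrt (R\<^sup>2 - (of_int n * bb)\<^sup>2)"
    proof -
      have "(bb * real (nat \<bar>n\<bar>))\<^sup>2 = (of_int n * bb)\<^sup>2"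
        by (simp add: power2_eq_square)
      then show ?thesis by (simp add: w_def gf_def)
    qed
    have iff: "(of_int m + of_int n * a)\<^sup>2 + (of_int n * bb)\<^sup>2 \<le> R\<^sup>2 \<longleftrightarrow> \<bar>of_int m - (- (of_int n * a))\<bar> \<le> w n" for m :: int
    proof -
      have "(of_int m + of_int n * a)\<^sup>2 + (of_int n * bb)\<^sup>2 \<le> R\<^sup>2 \<longleftrightarrow> (of_int m + of_int n * a)\<^sup>2 \<le> R\<^sup>2 - (of_int n * bb)\<^sup>2"
        by linarith
      also have "\<dots> \<longleftrightarrow> \<bar>of_int m + of_int n * a\<bar> \<le> w n" unfolding wn by (rule sq_le_sqrt_iff[OF nn])
      finally show ?thesis by simp
    qed
    show ?thesis unfolding Row_def by (rule Collect_cong) (rule iff)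
  qed
  have w0: "w n \<ge> 0" if "n \<in> {-int N..int N}" for n
  proof -
    have "real (nat \<bar>n\<bar>) \<le> real N" using that by auto
    then have u: "real (nat \<bar>n\<bar>) \<le> R / bb" using NR by linarith
    show ?thesis unfolding w_def by (rule gf_nonneg[OF b' R0 of_nat_0_le_iff u])
  qed
  have cardrow: "\<bar>real (card (Row n)) - 2 * w n\<bar> \<le> 1" if "n \<in> {-int N..int N}" for n
    unfolding rowI[OF that] by (rule card_int_interval[OF w0[OF that]])
  have finrow: "finite (Row n)" if "n \<in> {-int N..int N}" for n
  proof -
    have "Row n = {\<lceil>- (of_int n * a) - w n\<rceil>..\<lfloor>- (of_int n * a) + w n\<rfloor>}"
      unfolding rowI[OF that] by (auto simp: abs_le_iff ceiling_le_iff le_floor_iff)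
    then show ?thesis by simp
  qed
  have card_eq: "real (card (Rset \<tau> (R\<^sup>2))) = (\<Sum>n\<in>{-int N..int N}. real (card (Row n)))"
    unfolding eqS using finrow by (simp add: card_SigmaI)
  have d1: "\<bar>(\<Sum>n\<in>{-int N..int N}. real (card (Row n))) - (\<Sum>n\<in>{-int N..int N}. 2 * w n)\<bar> \<le> 2 * real N + 1"
  proof -
    have "\<bar>(\<Sum>n\<in>{-int N..int N}. real (card (Row n))) - (\<Sum>n\<in>{-int N..int N}. 2 * w n)\<bar>
        = \<bar>\<Sum>n\<in>{-int N..int N}. real (card (Row n)) - 2 * w n\<bar>" by (simp add: sum_subtractf)
    also have "\<dots> \<le> (\<Sum>n\<in>{-int N..int N}. \<bar>real (card (Row n)) - 2 * w n\<bar>)" by (rule sum_abs)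
    also have "\<dots> \<le> (\<Sum>n\<in>{-int N..int N}. 1)" by (rule sum_mono) (rule cardrow)
    also have "\<dots> = 2 * real N + 1" by simp
    finally show ?thesis .
  qed
  define S where "S = (\<Sum>k\<le>N. gf bb R (real k))"
  have symm: "(\<Sum>n\<in>{-int N..int N}. w n) = 2 * S - R"
  proof -
    have "(\<Sum>n\<in>{-int N..int N}. w n) = 2 * (\<Sum>k\<le>N. gf bb R (real k)) - gf bb R (real 0)"
      unfolding w_def by (rule sym_sum)
    moreover have "gf bb R (real 0) = R" using R0 by (simp add: gf_def)
    ultimately show ?thesis by (simp add: S_def)
  qed
  have gs: "S - R \<le> pi * R\<^sup>2 / (4*bb) \<and> pi * R\<^sup>2 / (4*bb) \<le> S"
    using gf_sum[OF b' R0] unfolding S_def N_def .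
  have "(\<Sum>n\<in>{-int N..int N}. 2 * w n) = 4 * S - 2 * R" by (simp add: sum_distrib_left[symmetric] symm)
  moreover have "pi * R\<^sup>2 / bb = 4 * (pi * R\<^sup>2 / (4*bb))" by simp
  moreover have "2 * real N \<le> 2 * R / bb" using NR by simp
  ultimately have "\<bar>real (card (Rset \<tau> (R\<^sup>2))) - pi * R\<^sup>2 / bb\<bar> \<le> 2 * R / bb + 1 + 2 * R"
    using d1 gs unfolding card_eq by linarith
  also have "\<dots> \<le> (3 + 2 / bb) * R" using R by (simp add: field_simps)
  finally show ?thesis by (simp add: bb_def)
qed



lemma row_convex:
  fixes a b R :: real and k i j l :: int
  assumes "(of_int i + of_int k * a)\<^sup>2 + (of_int k * b)\<^sup>2 \<le> R"
    and "(of_int l + of_int k * a)\<^sup>2 + (of_int k * b)\<^sup>2 \<le> R"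
    and "i \<le> j" "j \<le> l"
  shows "(of_int j + of_int k * a)\<^sup>2 + (of_int k * b)\<^sup>2 \<le> R"
proof -
  have e: "(of_int u + of_int k * a)\<^sup>2 + (of_int k * b)\<^sup>2
      = 1 * (of_int u)\<^sup>2 + (2 * of_int k * a) * of_int u + ((of_int k * a)\<^sup>2 + (of_int k * b)\<^sup>2)" for u :: int
    by (simp add: power2_eq_square algebra_simps)
  show ?thesis using assms unfolding e
    by (intro quad_convex[of 1 "of_int i" "of_int j" "of_int l"]) auto
qed

lemma col_convex:
  fixes a b R :: real and k i j l :: int
  assumes "(of_int k + of_int i * a)\<^sup>2 + (of_int i * b)\<^sup>2 \<le> R"
    and "(of_int k + of_int l * a)\<^sup>2 + (of_int l * b)\<^sup>2 \<le> R"
    and "i \<le> j" "j \<le> l"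
  shows "(of_int k + of_int j * a)\<^sup>2 + (of_int j * b)\<^sup>2 \<le> R"
proof -
  have e: "(of_int k + of_int u * a)\<^sup>2 + (of_int u * b)\<^sup>2
      = (a\<^sup>2 + b\<^sup>2) * (of_int u)\<^sup>2 + (2 * of_int k * a) * of_int u + (of_int k)\<^sup>2" for u :: int
    by (simp add: power2_eq_square algebra_simps)
  show ?thesis using assms unfolding e
    by (intro quad_convex[of "a\<^sup>2 + b\<^sup>2" "of_int i" "of_int j" "of_int l"]) auto
qed

lemma char_bound:
  fixes \<tau> \<alpha> \<beta> :: complex
  assumes b: "Im \<tau> > 0" and na: "norm \<alpha> = 1" and nb: "norm \<beta> = 1" and nt: "\<alpha> \<noteq> 1 \<or> \<beta> \<noteq> 1"
  shows "\<exists>K. \<forall>R\<ge>1. norm (\<Sum>p\<in>Rset \<tau> (R\<^sup>2). \<alpha> powi snd p * \<beta> powi fst p) \<le> K * R"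
proof (cases "\<alpha> \<noteq> 1")
  case True
  define c where "c = 2 / norm (1 - \<alpha>)"
  have c0: "c \<ge> 0" by (simp add: c_def)
  show ?thesis
  proof (intro exI allI impI)
    fix R :: real assume R: "R \<ge> 1"
    define S where "S = Rset \<tau> (R\<^sup>2)"
    define K where "K = \<lfloor>R / Im \<tau>\<rfloor>"
    have K0: "K \<ge> 0" using R b by (simp add: K_def)
    have finS: "finite S" unfolding S_def by (rule finite_Rset[OF b])
    have bd: "\<bar>k\<bar> \<le> K" if "(k,j) \<in> S" for k j
      unfolding K_def by (rule int_abs_le_floor) (use Rset_bound[OF b _ that[unfolded S_def]] R in simp)
    have fin: "finite {j. (k,j) \<in> S}" for k
      by (rule finite_subset[of _ "snd ` S"]) (use finS in force)+
    have cvx: "(k,j) \<in> S" if "(k,i) \<in> S" "(k,l) \<in> S" "i \<le> j" "j \<le> l" for k i j l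
      using that unfolding S_def Rset_def by (auto intro: row_convex)
    have rb: "norm (\<Sum>(k,j)\<in>{(k,j). (k,j) \<in> S}. \<beta> powi k * \<alpha> powi j) \<le> (2*K+1) * c"
      unfolding c_def by (rule rows_bound[OF na True nb K0]) (auto intro: bd fin cvx)
    have eqS: "{(k,j). (k,j) \<in> S} = S" by auto
    have "(\<Sum>p\<in>S. \<alpha> powi snd p * \<beta> powi fst p) = (\<Sum>(k,j)\<in>S. \<beta> powi k * \<alpha> powi j)"
      by (rule sum.cong) (auto simp: mult.commute)
    then have n1: "norm (\<Sum>p\<in>S. \<alpha> powi snd p * \<beta> powi fst p) \<le> (2*K+1) * c" using rb eqS by simp
    have "real_of_int K \<le> R / Im \<tau>" unfolding K_def by linarith
    moreover have "(2 / Im \<tau> + 1) * R = 2 * (R / Im \<tau>) + R" by (simp add: algebra_simps)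
    ultimately have "real_of_int (2*K+1) \<le> (2 / Im \<tau> + 1) * R" using R by simp
    then have "(2*K+1) * c \<le> ((2 / Im \<tau> + 1) * c) * R" using c0
      by (metis mult.commute mult.left_commute mult_right_mono)
    then show "norm (\<Sum>p\<in>Rset \<tau> (R\<^sup>2). \<alpha> powi snd p * \<beta> powi fst p) \<le> ((2 / Im \<tau> + 1) * c) * R"
      using n1 unfolding S_def by linarith
  qed
next
  case False
  then have a1: "\<alpha> = 1" and b1: "\<beta> \<noteq> 1" using nt by auto
  define c where "c = 2 / norm (1 - \<beta>)"
  have c0: "c \<ge> 0" by (simp add: c_def)
  define D where "D = 1 + \<bar>Re \<tau>\<bar> / Im \<tau>"
  show ?thesis
  proof (intro exI allI impI)
    fix R :: real assume R: "R \<ge> 1"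
    define S where "S = Rset \<tau> (R\<^sup>2)"
    define K where "K = \<lfloor>R + R * \<bar>Re \<tau>\<bar> / Im \<tau>\<rfloor>"
    have K0: "K \<ge> 0" using R b by (simp add: K_def)
    have finS: "finite S" unfolding S_def by (rule finite_Rset[OF b])
    have bd: "\<bar>k\<bar> \<le> K" if "(j,k) \<in> S" for k j
      unfolding K_def by (rule int_abs_le_floor) (use Rset_bound[OF b _ that[unfolded S_def]] R in simp)
    have fin: "finite {j. (j,k) \<in> S}" for k
      by (rule finite_subset[of _ "fst ` S"]) (use finS in force)+
    have cvx: "(j,k) \<in> S" if "(i,k) \<in> S" "(l,k) \<in> S" "i \<le> j" "j \<le> l" for k i j l
      using that unfolding S_def Rset_def by (auto intro: col_convex)
    have one: "norm (1::complex) = 1" by simp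
    have rb: "norm (\<Sum>(k,j)\<in>{(k,j). (j,k) \<in> S}. 1 powi k * \<beta> powi j) \<le> (2*K+1) * c"
      unfolding c_def by (rule rows_bound[OF nb b1 one K0]) (auto intro: bd fin cvx)
    have sw: "{(k,j). (j,k) \<in> S} = prod.swap ` S" by force
    have "(\<Sum>(k,j)\<in>{(k,j). (j,k) \<in> S}. 1 powi k * \<beta> powi j) = (\<Sum>q\<in>prod.swap ` S. \<beta> powi snd q)"
      unfolding sw by (rule sum.cong) auto
    also have "\<dots> = (\<Sum>p\<in>S. \<beta> powi fst p)"
      by (subst sum.reindex) (auto simp: comp_def)
    also have "\<dots> = (\<Sum>p\<in>S. \<alpha> powi snd p * \<beta> powi fst p)" using a1 by simp
    finally have n1: "norm (\<Sum>p\<in>S. \<alpha> powi snd p * \<beta> powi fst p) \<le> (2*K+1) * c" using rb by simp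
    have "real_of_int K \<le> R + R * \<bar>Re \<tau>\<bar> / Im \<tau>" unfolding K_def by linarith
    moreover have "(2 * D + 1) * R = 2 * (R + R * \<bar>Re \<tau>\<bar> / Im \<tau>) + R" by (simp add: D_def algebra_simps)
    ultimately have "real_of_int (2*K+1) \<le> (2 * D + 1) * R" using R by simp
    then have "(2*K+1) * c \<le> ((2 * D + 1) * c) * R" using c0
      by (metis mult.commute mult.left_commute mult_right_mono)
    then show "norm (\<Sum>p\<in>Rset \<tau> (R\<^sup>2). \<alpha> powi snd p * \<beta> powi fst p) \<le> ((2 * D + 1) * c) * R"
      using n1 unfolding S_def by linarith
  qed
qed


lemma powr_mhalf:
  fixes x :: real assumes "x > 0"
  shows "x powr (-1/2) = 1 / sqrt x"
proof -
  have e: "(-1/2::real) = -(1/2)" by simp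
  have "x powr (-1/2) = inverse (x powr (1/2))" unfolding e by (rule powr_minus)
  also have "x powr (1/2) = sqrt x" by (rule powr_half_sqrt) (use assms in simp)
  finally show ?thesis by (simp only: inverse_eq_divide)
qed

lemma limit_from_bound:
  fixes U :: "'a set" and r :: "'a \<Rightarrow> real" and w :: "'a \<Rightarrow> complex"
    and S Z :: "real \<Rightarrow> complex" and \<delta> :: complex and C :: real
  assumes fin: "\<And>t. finite {\<mu>\<in>U. r \<mu> \<le> t}"
    and S_def: "\<And>t. S t = (\<Sum>\<mu>\<in>{\<mu>\<in>U. r \<mu> \<le> t}. w \<mu>)"
    and Z_def: "\<And>t. Z t = (\<Sum>\<mu>\<in>{\<mu>\<in>U. r \<mu> \<le> t}. w \<mu> / of_real (r \<mu>))"
    and bnd: "\<And>t. t \<ge> 1 \<Longrightarrow> norm (S t - \<delta> * of_real t) \<le> C * sqrt t"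
  shows "\<exists>L. ((\<lambda>x. Z x - \<delta> * of_real (ln x)) \<longlongrightarrow> L) at_top \<and>
           (\<forall>x\<ge>1. norm (Z x - \<delta> * of_real (ln x) - L) \<le> 6 * C / sqrt x)"
proof -
  have "norm ((Z y - \<delta> * of_real (ln y)) - (Z x - \<delta> * of_real (ln x))) \<le> 6 * C / sqrt x"
    if "1 \<le> x" "x \<le> y" for x y
    by (rule abel_step[OF fin S_def Z_def bnd that])
  then show ?thesis by (rule cauchy_limit)
qed

lemma bigO_from_bound:
  fixes f :: "real \<Rightarrow> complex" and K :: real
  assumes "\<forall>x\<ge>1. norm (f x) \<le> K / sqrt x"
  shows "f \<in> O[at_top](\<lambda>x. of_real (x powr (-1/2)))"
proof (rule bigoI[where c = K])
  show "eventually (\<lambda>x. norm (f x) \<le> K * norm (of_real (x powr (-1/2)) :: complex)) at_top"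
    using eventually_ge_at_top[of "1::real"]
  proof (rule eventually_mono)
    fix x :: real assume x: "x \<ge> 1"
    have h: "x powr (-1/2) = 1 / sqrt x" using x by (intro powr_mhalf) simp
    have "norm (of_real (x powr (-1/2)) :: complex) = \<bar>x powr (-1/2)\<bar>" by (rule norm_of_real)
    also have "\<dots> = 1 / sqrt x" unfolding h by (rule abs_of_nonneg) (use x in simp)
    finally have nn: "norm (of_real (x powr (-1/2)) :: complex) = 1 / sqrt x" .
    have "norm (f x) \<le> K / sqrt x" using assms x by blast
    then show "norm (f x) \<le> K * norm (of_real (x powr (-1/2)) :: complex)"
      unfolding nn by (simp only: times_divide_eq_right mult_1_right)
  qed
qed

theorem mainTheorem10:
  fixes \<tau> :: complex and \<psi> :: "complex \<Rightarrow> complex"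
  assumes "Im \<tau> > 0"
    and "is_character \<tau> \<psi>"
  shows "((\<forall>\<mu>\<in>lattice \<tau>. \<psi> \<mu> = 1) \<longrightarrow>
           (\<exists>\<eta>::real. (\<lambda>x. Zsum x \<tau> \<psi> - of_real (pi / covolume \<tau> * (ln x + \<eta>)))
                \<in> O[at_top](\<lambda>x. of_real (x powr (-1/2)))))
       \<and> (\<not> (\<forall>\<mu>\<in>lattice \<tau>. \<psi> \<mu> = 1) \<longrightarrow>
           (\<exists>L::complex. ((\<lambda>x. Zsum x \<tau> \<psi>) \<longlongrightarrow> L) at_top \<and>
                (\<lambda>x. Zsum x \<tau> \<psi> - L) \<in> O[at_top](\<lambda>x. of_real (x powr (-1/2)))))"
proof -
  note b = assms(1) and c = assms(2)
  define U where "U = {\<mu>\<in>lattice \<tau>. \<mu> \<noteq> 0}"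
  define r where "r = (\<lambda>\<mu>::complex. (cmod \<mu>)\<^sup>2)"
  have setEq: "{\<mu>\<in>U. r \<mu> \<le> t} = {\<mu>\<in>lattice \<tau>. \<mu> \<noteq> 0 \<and> (cmod \<mu>)\<^sup>2 \<le> t}" for t
    by (auto simp: U_def r_def)
  have fin: "finite {\<mu>\<in>U. r \<mu> \<le> t}" for t unfolding setEq by (rule finite_A[OF b])
  define S where "S = (\<lambda>t. \<Sum>\<mu>\<in>{\<mu>\<in>U. r \<mu> \<le> t}. \<psi> \<mu>)"
  define Z where "Z = (\<lambda>t. \<Sum>\<mu>\<in>{\<mu>\<in>U. r \<mu> \<le> t}. \<psi> \<mu> / of_real (r \<mu>))"
  have S_def': "\<And>t. S t = (\<Sum>\<mu>\<in>{\<mu>\<in>U. r \<mu> \<le> t}. \<psi> \<mu>)" by (simp add: S_def)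
  have Z_def': "\<And>t. Z t = (\<Sum>\<mu>\<in>{\<mu>\<in>U. r \<mu> \<le> t}. \<psi> \<mu> / of_real (r \<mu>))" by (simp add: Z_def)
  have ZZ: "Zsum x \<tau> \<psi> = Z x" for x unfolding Z_def setEq unfolding r_def Zsum_def ..
  define \<alpha> where "\<alpha> = \<psi> 1"
  define \<beta> where "\<beta> = \<psi> \<tau>"
  have na: "norm \<alpha> = 1" using c lattice_1 unfolding is_character_def \<alpha>_def by blast
  have nb: "norm \<beta> = 1" using c lattice_tau unfolding is_character_def \<beta>_def by blast
  have Sform: "S t = (\<Sum>p\<in>Rset \<tau> t. \<alpha> powi snd p * \<beta> powi fst p) - 1" if t: "t \<ge> 0" for t
  proof -
    have "S t = (\<Sum>p\<in>Rset \<tau> t. \<psi> (phi \<tau> p)) - \<psi> 0"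
      unfolding S_def setEq by (rule sum_A[OF b t])
    also have "(\<Sum>p\<in>Rset \<tau> t. \<psi> (phi \<tau> p)) = (\<Sum>p\<in>Rset \<tau> t. \<alpha> powi snd p * \<beta> powi fst p)"
      by (rule sum.cong) (auto simp: psi_phi[OF c] \<alpha>_def \<beta>_def)
    finally show ?thesis using psi_0[OF c] by simp
  qed
  have part1: "(\<exists>\<eta>::real. (\<lambda>x. Zsum x \<tau> \<psi> - of_real (pi / covolume \<tau> * (ln x + \<eta>)))
                \<in> O[at_top](\<lambda>x. of_real (x powr (-1/2))))" if triv: "\<forall>\<mu>\<in>lattice \<tau>. \<psi> \<mu> = 1"
  proof -
    define bb where "bb = Im \<tau>"
    have bb: "bb > 0" using b by (simp add: bb_def)
    have cov: "covolume \<tau> = bb" using b by (simp add: covolume_def bb_def)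
    define \<delta> where "\<delta> = (of_real (pi / bb) :: complex)"
    define C where "C = 4 + 2 / bb"
    have bnd: "norm (S t - \<delta> * of_real t) \<le> C * sqrt t" if t: "t \<ge> 1" for t
    proof -
      define R where "R = sqrt t"
      have R: "R \<ge> 1" "R\<^sup>2 = t" using t by (auto simp: R_def)
      have "S t = (\<Sum>p\<in>Rset \<tau> t. \<psi> (phi \<tau> p)) - \<psi> 0"
        unfolding S_def setEq by (rule sum_A[OF b]) (use t in simp)
      also have "(\<Sum>p\<in>Rset \<tau> t. \<psi> (phi \<tau> p)) = (\<Sum>p\<in>Rset \<tau> t. 1)"
        by (rule sum.cong) (use triv in \<open>auto simp: lattice_eq\<close>)
      finally have "S t = of_nat (card (Rset \<tau> t)) - 1" using psi_0[OF c] by simp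
      then have "S t - \<delta> * of_real t = of_real (real (card (Rset \<tau> (R\<^sup>2))) - pi * R\<^sup>2 / bb - 1)"
        using R by (simp add: \<delta>_def)
      then have "norm (S t - \<delta> * of_real t) = \<bar>real (card (Rset \<tau> (R\<^sup>2))) - pi * R\<^sup>2 / bb - 1\<bar>"
        by (simp only: norm_of_real)
      also have "\<dots> \<le> (3 + 2 / bb) * R + 1"
        using count_bound[OF b R(1)] by (simp add: bb_def)
      also have "\<dots> \<le> C * R" using R(1) by (simp add: C_def algebra_simps)
      finally show ?thesis by (simp add: R_def)
    qed
    obtain L where L: "((\<lambda>x. Z x - \<delta> * of_real (ln x)) \<longlongrightarrow> L) at_top"
      and Lb: "\<forall>x\<ge>1. norm (Z x - \<delta> * of_real (ln x) - L) \<le> 6 * C / sqrt x"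
      using limit_from_bound[OF fin S_def' Z_def' bnd] by blast
    define \<eta> where "\<eta> = Re L * bb / pi"
    have Zreal: "Im (Z x) = 0" for x
    proof -
      have "Z x = (\<Sum>\<mu>\<in>{\<mu>\<in>U. r \<mu> \<le> x}. 1 / of_real (r \<mu>))"
        unfolding Z_def by (rule sum.cong) (use triv in \<open>auto simp: U_def\<close>)
      then show ?thesis by (simp add: Im_sum)
    qed
    have "(\<lambda>x. Zsum x \<tau> \<psi> - of_real (pi / covolume \<tau> * (ln x + \<eta>))) \<in> O[at_top](\<lambda>x. of_real (x powr (-1/2)))"
    proof (rule bigO_from_bound, intro allI impI)
      fix x :: real assume x: "x \<ge> 1"
      have e1: "pi / covolume \<tau> * (ln x + \<eta>) = pi / bb * ln x + Re L"
        using bb by (simp add: cov \<eta>_def field_simps)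
      have e2: "Zsum x \<tau> \<psi> - of_real (pi / covolume \<tau> * (ln x + \<eta>)) = (Z x - \<delta> * of_real (ln x)) - of_real (Re L)"
        unfolding ZZ e1 by (simp add: \<delta>_def)
      have im0: "Im ((Z x - \<delta> * of_real (ln x)) - of_real (Re L)) = 0" using Zreal by (simp add: \<delta>_def)
      have "norm ((Z x - \<delta> * of_real (ln x)) - of_real (Re L)) = \<bar>Re ((Z x - \<delta> * of_real (ln x)) - of_real (Re L))\<bar>"
        using im0 by (simp add: cmod_eq_Re)
      also have "\<dots> = \<bar>Re (Z x - \<delta> * of_real (ln x) - L)\<bar>" by simp
      also have "\<dots> \<le> norm (Z x - \<delta> * of_real (ln x) - L)" by (rule abs_Re_le_cmod)
      also have "\<dots> \<le> 6 * C / sqrt x" using Lb x by blast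
      finally show "norm (Zsum x \<tau> \<psi> - of_real (pi / covolume \<tau> * (ln x + \<eta>))) \<le> 6 * C / sqrt x"
        unfolding e2 .
    qed
    then show ?thesis by blast
  qed
  have part2: "(\<exists>L::complex. ((\<lambda>x. Zsum x \<tau> \<psi>) \<longlongrightarrow> L) at_top \<and>
                (\<lambda>x. Zsum x \<tau> \<psi> - L) \<in> O[at_top](\<lambda>x. of_real (x powr (-1/2))))"
    if ntriv: "\<not> (\<forall>\<mu>\<in>lattice \<tau>. \<psi> \<mu> = 1)"
  proof -
    have nt: "\<alpha> \<noteq> 1 \<or> \<beta> \<noteq> 1"
    proof (rule ccontr)
      assume "\<not> (\<alpha> \<noteq> 1 \<or> \<beta> \<noteq> 1)"
      then have a1: "\<alpha> = 1" "\<beta> = 1" by auto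
      have "\<psi> \<mu> = 1" if mu: "\<mu> \<in> lattice \<tau>" for \<mu>
      proof -
        obtain p where p: "\<mu> = phi \<tau> p" using mu unfolding lattice_eq by blast
        obtain n m where pe: "p = (n,m)" by (cases p)
        show ?thesis unfolding p pe psi_phi[OF c] using a1 by (simp add: \<alpha>_def \<beta>_def)
      qed
      then show False using ntriv by blast
    qed
    obtain K where K: "\<forall>R\<ge>1. norm (\<Sum>p\<in>Rset \<tau> (R\<^sup>2). \<alpha> powi snd p * \<beta> powi fst p) \<le> K * R"
      using char_bound[OF b na nb nt] by blast
    define C where "C = K + 1"
    have bnd: "norm (S t - 0 * of_real t) \<le> C * sqrt t" if t: "t \<ge> 1" for t
    proof -
      define R where "R = sqrt t"
      have R: "R \<ge> 1" "R\<^sup>2 = t" using t by (auto simp: R_def)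
      have "norm (S t - 0 * of_real t) = norm ((\<Sum>p\<in>Rset \<tau> (R\<^sup>2). \<alpha> powi snd p * \<beta> powi fst p) - 1)"
        using Sform[of t] t R by simp
      also have "\<dots> \<le> norm (\<Sum>p\<in>Rset \<tau> (R\<^sup>2). \<alpha> powi snd p * \<beta> powi fst p) + 1"
        by (rule order_trans[OF norm_triangle_ineq4]) simp
      also have "\<dots> \<le> K * R + 1" using K R(1) by simp
      also have "\<dots> \<le> C * R" using R by (simp add: C_def algebra_simps)
      finally show ?thesis by (simp add: R_def)
    qed
    obtain L where L: "((\<lambda>x. Z x - 0 * of_real (ln x)) \<longlongrightarrow> L) at_top"
      and Lb: "\<forall>x\<ge>1. norm (Z x - 0 * of_real (ln x) - L) \<le> 6 * C / sqrt x"
      using limit_from_bound[OF fin S_def' Z_def' bnd] by blast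
    have "((\<lambda>x. Zsum x \<tau> \<psi>) \<longlongrightarrow> L) at_top" using L by (simp add: ZZ)
    moreover have "(\<lambda>x. Zsum x \<tau> \<psi> - L) \<in> O[at_top](\<lambda>x. of_real (x powr (-1/2)))"
      by (rule bigO_from_bound) (use Lb in \<open>simp add: ZZ\<close>)
    ultimately show ?thesis by blast
  qed
  show ?thesis using part1 part2 by blast
qed

end
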